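(* Let $\mathcal{H}$ be a complex separable Hilbert space and let $T = MN - NM$ where $M, N \in \mathcal{B}(\mathcal{H})$ satisfy $M^2 = 0 = N^2$. Then for every $0 \ne \alpha \in \mathbb{C}$ and every integer $k \ge 1$, \[ \dim \ker (T - \alpha I)^k = \dim \ker (T + \alpha I)^k. \] *)

theory Defs
  imports "HOL-Analysis.Analysis"
begin

text \<open>A complex Hilbert space: a (real) Banach space whose norm is induced by a
  complex inner product, together with a complex scalar multiplication extending
  the real one.\<close>

class complex_hilbert_space = banach +
  fixes scaleC :: "complex \<Rightarrow> 'a \<Rightarrow> 'a" (infixr "*\<^sub>C" 75)
    and cinner :: "'a \<Rightarrow> 'a \<Rightarrow> complex"
  assumes scaleC_add_right: "a *\<^sub>C (x + y) = a *\<^sub>C x + a *\<^sub>C y"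
    and scaleC_add_left: "(a + b) *\<^sub>C x = a *\<^sub>C x + b *\<^sub>C x"
    and scaleC_scaleC: "a *\<^sub>C (b *\<^sub>C x) = (a * b) *\<^sub>C x"
    and scaleC_one: "1 *\<^sub>C x = x"
    and scaleC_of_real: "complex_of_real r *\<^sub>C x = r *\<^sub>R x"
    and cinner_add_left: "cinner (x + y) z = cinner x z + cinner y z"
    and cinner_scaleC_left: "cinner (a *\<^sub>C x) y = cnj a * cinner x y"
    and cinner_commute: "cinner y x = cnj (cinner x y)"
    and cinner_norm: "cinner x x = complex_of_real ((norm x)\<^sup>2)"

definition bounded_clinear_op :: "('a::complex_hilbert_space \<Rightarrow> 'a) \<Rightarrow> bool" where
  "bounded_clinear_op f \<longleftrightarrow>
     (\<forall>x y. f (x + y) = f x + f y) \<and> (\<forall>c x. f (c *\<^sub>C x) = c *\<^sub>C f x) \<and>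
     (\<exists>K. \<forall>x. norm (f x) \<le> norm x * K)"

definition ker :: "('a::complex_hilbert_space \<Rightarrow> 'a) \<Rightarrow> 'a set" where
  "ker f = {x. f x = 0}"

text \<open>Complex dimension of a subspace, with value \<open>\<infinity>\<close> for infinite-dimensional ones
  (in a separable space, all infinite-dimensional closed subspaces have the same
  Hilbert dimension \<open>\<aleph>\<^sub>0\<close>).\<close>
definition cdim :: "'a::complex_hilbert_space set \<Rightarrow> enat" where
  "cdim S = (if \<exists>B. finite B \<and> S \<subseteq> module.span scaleC B
             then enat (vector_space.dim scaleC S) else \<infinity>)"

end

theory Submission
  imports Defs
begin

interpretation cv: vector_space "scaleC :: complex \<Rightarrow> 'a::complex_hilbert_space \<Rightarrow> 'a"
  by unfold_locales (simp_all add: scaleC_add_right scaleC_add_left scaleC_scaleC scaleC_one)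

definition lin :: "('a::complex_hilbert_space \<Rightarrow> 'a) \<Rightarrow> bool" where
  "lin f \<longleftrightarrow> (\<forall>x y. f (x + y) = f x + f y) \<and> (\<forall>c x. f (c *\<^sub>C x) = c *\<^sub>C f x)"

lemma lin_hom: "lin f \<Longrightarrow> module_hom scaleC scaleC f"
  unfolding lin_def module_hom_def module_hom_axioms_def
  using cv.module_axioms by auto

lemma lin_zero: "lin f \<Longrightarrow> f 0 = 0"
  using module_hom.zero[OF lin_hom] by blast
lemma lin_diff: "lin f \<Longrightarrow> f (x - y) = f x - f y"
  using module_hom.diff[OF lin_hom] by blast
lemma lin_minus: "lin f \<Longrightarrow> f (- x) = - f x"
  using module_hom.neg[OF lin_hom] by blast
lemma lin_add: "lin f \<Longrightarrow> f (x + y) = f x + f y"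
  unfolding lin_def by blast
lemma lin_scale: "lin f \<Longrightarrow> f (c *\<^sub>C x) = c *\<^sub>C f x"
  unfolding lin_def by blast

lemma lin_pow: "lin f \<Longrightarrow> lin (f ^^ n)"
  by (induction n) (auto simp: lin_def)

lemma ker_subspace: "lin f \<Longrightarrow> cv.subspace (ker f)"
  unfolding cv.subspace_def ker_def
  by (auto simp: lin_zero lin_add lin_scale)

lemma cdim_le:
  fixes A :: "'a::complex_hilbert_space \<Rightarrow> 'a"
  assumes "lin A" "cv.subspace S1" "A ` S1 \<subseteq> S2" "inj_on A S1"
  shows "cdim S1 \<le> cdim S2"
proof (cases "\<exists>B. finite B \<and> S2 \<subseteq> cv.span B")
  case False
  then have "cdim S2 = \<infinity>" unfolding cdim_def by meson
  then show ?thesis by simp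
next
  case True
  then obtain B where B: "finite B" "S2 \<subseteq> cv.span B" by blast
  obtain C where C: "C \<subseteq> S1" "cv.independent C" "S1 \<subseteq> cv.span C"
    using cv.maximal_independent_subset by blast
  have spC: "cv.span C = S1" using cv.span_subspace[OF C(1) C(3) assms(2)] .
  have ind: "cv.independent (A ` C)"
    using module_hom.independent_injective_image[OF lin_hom[OF assms(1)] C(2)] assms(4) spC
    by simp
  have sub: "A ` C \<subseteq> S2" using C(1) assms(3) by blast
  have "finite (A ` C)" using cv.independent_span_bound[OF B(1) ind] sub B(2) by blast
  then have fC: "finite C" using finite_image_iff[of A C] inj_on_subset[OF assms(4) C(1)] by simp
  have d1: "cv.dim S1 = card C" using cv.dim_unique[OF C(1) C(3) C(2) refl] .
  obtain D where D: "A ` C \<subseteq> D" "D \<subseteq> S2" "cv.independent D" "S2 \<subseteq> cv.span D"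
    using cv.maximal_independent_subset_extend[OF sub ind] by blast
  have fD: "finite D" using cv.independent_span_bound[OF B(1) D(3)] D(2) B(2) by blast
  have "card D = cv.dim S2" using cv.basis_card_eq_dim[OF D(2) D(4) D(3)] .
  then have "card (A ` C) \<le> cv.dim S2" using card_mono[OF fD D(1)] by simp
  moreover have "card (A ` C) = card C" using card_image[OF inj_on_subset[OF assms(4) C(1)]] .
  ultimately show ?thesis unfolding cdim_def using True fC C(3) d1 by auto
qed

lemma funpow_anti:
  fixes U V A :: "'a::complex_hilbert_space \<Rightarrow> 'a"
  assumes "\<And>x. V (A x) = - A (U x)" "\<And>y. V (- y) = - V y"
  shows "(V ^^ n) (A x) = (if even n then A ((U ^^ n) x) else - A ((U ^^ n) x))"
  by (induction n) (auto simp: assms)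

lemma ker_T2:
  fixes T :: "'a::complex_hilbert_space \<Rightarrow> 'a"
  assumes "lin T" "\<beta> \<noteq> 0"
  shows "T (T x) = 0 \<Longrightarrow> ((\<lambda>x. T x - \<beta> *\<^sub>C x) ^^ n) x = 0 \<Longrightarrow> x = 0"
proof (induction n arbitrary: x)
  case 0
  then show ?case by simp
next
  case (Suc n)
  let ?U = "\<lambda>x. T x - \<beta> *\<^sub>C x"
  have "T (T (?U x)) = 0"
    using Suc.prems(1) assms(1) by (simp add: lin_diff lin_scale lin_minus lin_zero)
  moreover have "(?U ^^ n) (?U x) = 0" using Suc.prems(2) by (simp add: funpow_Suc_right del: funpow.simps)
  ultimately have "?U x = 0" using Suc.IH by blast
  then have Tx: "T x = \<beta> *\<^sub>C x" by simp
  then have "T (T x) = (\<beta> * \<beta>) *\<^sub>C x" using assms(1) by (simp add: lin_scale scaleC_scaleC)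
  then have "(\<beta> * \<beta>) *\<^sub>C x = 0" using Suc.prems(1) by simp
  then have "(inverse (\<beta> * \<beta>)) *\<^sub>C ((\<beta> * \<beta>) *\<^sub>C x) = 0" by simp
  then show ?case using assms(2) by (simp add: scaleC_scaleC scaleC_one)
qed


lemma lin_U: "lin T \<Longrightarrow> lin (\<lambda>x. T x - \<beta> *\<^sub>C x)"
  unfolding lin_def by (auto simp: cv.scale_right_diff_distrib cv.scale_right_distrib scaleC_scaleC mult.commute)

lemma main_dir:
  fixes T A :: "'a::complex_hilbert_space \<Rightarrow> 'a"
  assumes T: "lin T" and A: "lin A" and anti: "\<And>x. T (A x) = - A (T x)"
    and A4: "\<And>x. A (A (A (A x))) = T (T x)" and b: "\<beta> \<noteq> 0"
  shows "cdim (ker ((\<lambda>x. T x - \<beta> *\<^sub>C x) ^^ k)) \<le> cdim (ker ((\<lambda>x. T x - (- \<beta>) *\<^sub>C x) ^^ k))"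
proof (rule cdim_le[OF A])
  let ?U = "\<lambda>x. T x - \<beta> *\<^sub>C x"
  let ?V = "\<lambda>x. T x - (- \<beta>) *\<^sub>C x"
  show "cv.subspace (ker (?U ^^ k))" by (rule ker_subspace[OF lin_pow[OF lin_U[OF T]]])
  have VA: "?V (A x) = - A (?U x)" for x
    using anti A by (simp add: lin_diff lin_scale cv.scale_minus_left)
  have Vm: "?V (- y) = - ?V y" for y by (rule lin_minus[OF lin_U[OF T]])
  show "A ` ker (?U ^^ k) \<subseteq> ker (?V ^^ k)"
  proof
    fix y assume "y \<in> A ` ker (?U ^^ k)"
    then obtain x where x: "(?U ^^ k) x = 0" "y = A x" unfolding ker_def by auto
    show "y \<in> ker (?V ^^ k)"
      using funpow_anti[of ?V A ?U, OF VA Vm, of k x] x lin_zero[OF A] unfolding ker_def by simp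
  qed
  show "inj_on A (ker (?U ^^ k))"
  proof (rule inj_onI)
    fix x y assume xy: "x \<in> ker (?U ^^ k)" "y \<in> ker (?U ^^ k)" "A x = A y"
    let ?z = "x - y"
    have "A ?z = 0" using xy(3) lin_diff[OF A] by simp
    then have "T (T ?z) = 0" using A4[of ?z] lin_zero[OF A] by simp
    moreover have "(?U ^^ k) ?z = 0" using xy(1,2) lin_diff[OF lin_pow[OF lin_U[OF T]]] unfolding ker_def by simp
    ultimately have "?z = 0" using ker_T2[OF T b] by blast
    then show "x = y" by simp
  qed
qed

theorem theorem2p08:
  fixes M N :: "'a::complex_hilbert_space \<Rightarrow> 'a"
    and \<alpha> :: complex and k :: nat
  assumes separable: "\<exists>D. countable D \<and> closure D = (UNIV :: 'a set)"
    and M: "bounded_clinear_op M" and N: "bounded_clinear_op N"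
    and M2: "\<forall>x. M (M x) = 0" and N2: "\<forall>x. N (N x) = 0"
    and alpha: "\<alpha> \<noteq> 0" and k: "k \<ge> 1"
  defines "T \<equiv> (\<lambda>x. M (N x) - N (M x))"
  shows "cdim (ker ((\<lambda>x. T x - \<alpha> *\<^sub>C x) ^^ k)) = cdim (ker ((\<lambda>x. T x + \<alpha> *\<^sub>C x) ^^ k))"
proof -
  have lM: "lin M" using M unfolding bounded_clinear_op_def lin_def by blast
  have lN: "lin N" using N unfolding bounded_clinear_op_def lin_def by blast
  define A where "A = (\<lambda>x. M x + N x)"
  have lA: "lin A" using lM lN unfolding A_def lin_def by (auto simp: cv.scale_right_distrib)
  have lT: "lin T" using lM lN unfolding T_def lin_def by (auto simp: cv.scale_right_diff_distrib)
  have anti: "T (A x) = - A (T x)" for x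
    unfolding T_def A_def using M2 N2
    by (simp add: lin_add[OF lM] lin_add[OF lN] lin_diff[OF lM] lin_diff[OF lN] lin_zero[OF lM] lin_zero[OF lN] lin_minus[OF lM] lin_minus[OF lN])
  have A4: "A (A (A (A x))) = T (T x)" for x
    unfolding T_def A_def using M2 N2
    by (simp add: lin_add[OF lM] lin_add[OF lN] lin_diff[OF lM] lin_diff[OF lN] lin_zero[OF lM] lin_zero[OF lN] lin_minus[OF lM] lin_minus[OF lN])
  have e1: "(\<lambda>x. T x - (- \<alpha>) *\<^sub>C x) = (\<lambda>x. T x + \<alpha> *\<^sub>C x)"
    by (simp add: cv.scale_minus_left)
  have e2: "(\<lambda>x. T x - (- (- \<alpha>)) *\<^sub>C x) = (\<lambda>x. T x - \<alpha> *\<^sub>C x)" by simp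
  have "cdim (ker ((\<lambda>x. T x - \<alpha> *\<^sub>C x) ^^ k)) \<le> cdim (ker ((\<lambda>x. T x + \<alpha> *\<^sub>C x) ^^ k))"
    using main_dir[OF lT lA anti A4 alpha, of k] unfolding e1 .
  moreover have "cdim (ker ((\<lambda>x. T x + \<alpha> *\<^sub>C x) ^^ k)) \<le> cdim (ker ((\<lambda>x. T x - \<alpha> *\<^sub>C x) ^^ k))"
    using main_dir[OF lT lA anti A4, of "- \<alpha>" k] alpha unfolding e1 e2 by simp
  ultimately show ?thesis by (rule antisym)
qed

end
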